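(* Let $X$ be a finite set, $R>1$, $p\in(0,1]$, and let $\mathbf{A}\sim\pi$ be an $R$-spread random subset of $X$. Then there exists a coupling $\mathbb{P}_p$ of $\mathbf{A}\sim\pi$, $\mathbf{A}'\sim\pi$ and $\mathbf{V}\sim\mathbb{Q}_p$ (random subsets of $X$) under which $\mathbf{A}$ and $\mathbf{V}$ are independent and \[ \mathbb{E}_{\mathbb{P}_p}\bigg[\frac{|\mathbf{A}'\setminus\mathbf{V}|}{|\mathbf{A}|}\,\mathbf{1}\{\mathbf{A}\neq\emptyset\}\bigg]\le \frac{7}{(pR)^{1/3}}. \] Moreover, the marginal law of $\mathbf{A}'$ is the same as that of $\mathbf{A}$, and therefore $\mathbf{A}'$ is also $R$-spread.
   Context: For $R>1$, a random subset $\mathbf{A}\sim\pi$ of $X$ is called $R$-spread if for every fixed $S\subseteq X$, $\pi(S\subseteq \mathbf{A})\le R^{-|S|}$. For $p\in[0,1]$, $\mathbb{Q}_p$ denotes the law of the $p$-biased random subset of $X$, which includes each element of $X$ independently with probability $p$. The expression $\frac{|\mathbf{A}'\setminus\mathbf{V}|}{|\mathbf{A}|}\mathbf{1}\{\mathbf{A}\ne\emptyset\}$ is interpreted as $0$ when $\mathbf{A}=\emptyset$. *)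

theory Defs
  imports "HOL-Probability.Probability"
begin

definition random_subset_of :: "'a set \<Rightarrow> 'a set pmf \<Rightarrow> bool" where
  "random_subset_of X \<pi> \<longleftrightarrow> set_pmf \<pi> \<subseteq> Pow X"

definition spread :: "real \<Rightarrow> 'a set \<Rightarrow> 'a set pmf \<Rightarrow> bool" where
  "spread R X \<pi> \<longleftrightarrow> random_subset_of X \<pi> \<and>
     (\<forall>S. S \<subseteq> X \<longrightarrow> measure_pmf.prob \<pi> {A. S \<subseteq> A} \<le> inverse (R ^ card S))"

definition Qp :: "real \<Rightarrow> 'a set \<Rightarrow> 'a set pmf" where
  "Qp p X = map_pmf (\<lambda>f. {x \<in> X. f x}) (Pi_pmf X False (\<lambda>_. bernoulli_pmf p))"

end

theory Submission
  imports Defs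
begin


lemma pmf_map_inj_on_superset:
  assumes "inj_on f S" "set_pmf M \<subseteq> S" "x \<in> S"
  shows "pmf (map_pmf f M) (f x) = pmf M x"
proof -
  have "pmf (map_pmf f M) (f x) = measure M (f -` {f x})" by (rule pmf_map)
  also have "\<dots> = measure M (f -` {f x} \<inter> set_pmf M)" by (rule measure_Int_set_pmf[symmetric])
  also have "f -` {f x} \<inter> set_pmf M = {x} \<inter> set_pmf M" using assms by (auto simp: inj_on_def)
  also have "measure M \<dots> = measure M {x}" by (rule measure_Int_set_pmf)
  also have "\<dots> = pmf M x" by (rule measure_pmf_single)
  finally show ?thesis .
qed

lemma subset_binom:
  assumes "finite B"
  shows "(1 + t::real) ^ card B = (\<Sum>T\<in>Pow B. t ^ card T)"
proof -
  have "(\<Prod>x\<in>B. t + 1) = (\<Sum>X\<in>Pow B. (\<Prod>x\<in>X. t) * (\<Prod>x\<in>B-X. 1))"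
    by (rule prod_add[OF assms])
  then show ?thesis by (simp add: add.commute)
qed

lemma set_Qp: "set_pmf (Qp p Y) \<subseteq> Pow Y"
  unfolding Qp_def by auto

lemma pmf_Qp:
  assumes "finite Y" "0 \<le> p" "p \<le> 1"
  shows "pmf (Qp p Y) u = (if u \<subseteq> Y then (\<Prod>x\<in>Y. if x \<in> u then p else 1 - p) else 0)"
proof (cases "u \<subseteq> Y")
  case True
  define S where "S = {f::'a\<Rightarrow>bool. \<forall>x. x \<notin> Y \<longrightarrow> f x = False}"
  have inj: "inj_on (\<lambda>f. {x \<in> Y. f x}) S"
    unfolding S_def inj_on_def by (auto simp: fun_eq_iff set_eq_iff)
  have u: "u = (\<lambda>f. {x \<in> Y. f x}) (\<lambda>x. x \<in> u)" using True by auto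
  have "pmf (Qp p Y) u = pmf (Pi_pmf Y False (\<lambda>_. bernoulli_pmf p)) (\<lambda>x. x \<in> u)"
    unfolding Qp_def
    apply (subst u)
    apply (rule pmf_map_inj_on_superset[OF inj])
    using set_Pi_pmf_subset[OF assms(1), of False] True by (auto simp: S_def)
  also have "\<dots> = (\<Prod>x\<in>Y. if x \<in> u then p else 1 - p)"
    using True assms by (subst pmf_Pi') (auto intro!: prod.cong)
  finally show ?thesis using True by simp
next
  case False
  then show ?thesis using set_Qp[of p Y] by (auto simp: pmf_eq_0_set_pmf)
qed

lemma Qp_union:
  assumes "finite X"
  shows "map_pmf (\<lambda>v. c \<union> v) (Qp p X) = map_pmf (\<lambda>u. c \<union> u) (Qp p (X - c))"
proof -
  have "Qp p (X - c) = map_pmf (\<lambda>f. {x \<in> X - c. f x})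
          (map_pmf (\<lambda>f x. if x \<in> X - c then f x else False) (Pi_pmf X False (\<lambda>_. bernoulli_pmf p)))"
    unfolding Qp_def using assms by (subst Pi_pmf_subset[of X]) auto
  also have "\<dots> = map_pmf (\<lambda>f. {x \<in> X - c. f x}) (Pi_pmf X False (\<lambda>_. bernoulli_pmf p))"
    unfolding map_pmf_comp by (rule map_pmf_cong) auto
  finally have *: "Qp p (X - c) = \<dots>" .
  show ?thesis unfolding * unfolding Qp_def map_pmf_comp
    by (rule map_pmf_cong) auto
qed

lemma pmf_Qp_union:
  assumes "finite X" "c \<subseteq> X" "0 < p" "p \<le> 1"
  shows "pmf (map_pmf (\<lambda>v. c \<union> v) (Qp p X)) w =
          (if c \<subseteq> w \<and> w \<subseteq> X then pmf (Qp p X) w / p ^ card c else 0)"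
proof (cases "c \<subseteq> w \<and> w \<subseteq> X")
  case True
  have fin: "finite (X - c)" using assms by auto
  have "pmf (map_pmf (\<lambda>v. c \<union> v) (Qp p X)) w = pmf (map_pmf (\<lambda>u. c \<union> u) (Qp p (X - c))) ((\<lambda>u. c \<union> u) (w - c))"
    using True Qp_union[OF assms(1)] by (simp add: Un_absorb1 Un_Diff_cancel)
  also have "\<dots> = pmf (Qp p (X - c)) (w - c)"
    by (rule pmf_map_inj_on_superset[of _ "Pow (X - c)"]) (use True set_Qp in \<open>auto simp: inj_on_def\<close>)
  also have "\<dots> = (\<Prod>x\<in>X - c. if x \<in> w then p else 1 - p)"
    using True assms fin by (subst pmf_Qp) (auto intro!: prod.cong)
  finally have 1: "pmf (map_pmf (\<lambda>v. c \<union> v) (Qp p X)) w = (\<Prod>x\<in>X - c. if x \<in> w then p else 1 - p)" .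
  have "pmf (Qp p X) w = (\<Prod>x\<in>X. if x \<in> w then p else 1 - p)"
    using True assms by (subst pmf_Qp) auto
  also have "\<dots> = (\<Prod>x\<in>X - c. if x \<in> w then p else 1 - p) * (\<Prod>x\<in>c. if x \<in> w then p else 1 - p)"
    by (rule prod.subset_diff[OF assms(2) assms(1)])
  also have "(\<Prod>x\<in>c. if x \<in> w then p else 1 - p) = p ^ card c"
    using True by (subst prod.cong[OF refl, of _ _ "\<lambda>_. p"]) auto
  finally show ?thesis using 1 True assms by simp
next
  case False
  have "w \<notin> (\<lambda>v. c \<union> v) ` set_pmf (Qp p X)"
    using False set_Qp[of p X] assms(2) by auto
  then have "pmf (map_pmf (\<lambda>v. c \<union> v) (Qp p X)) w = 0" by (rule pmf_map_outside)
  then show ?thesis using False by auto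
qed



locale setting =
  fixes X :: "'a set" and R p :: real and \<pi> :: "'a set pmf"
  assumes finX: "finite X" and R1: "R > 1" and p0: "0 < p" and p1: "p \<le> 1"
    and spr: "spread R X \<pi>"
begin

abbreviation Q where "Q \<equiv> Qp p X"
definition M :: "'a set \<Rightarrow> 'a set pmf" where "M c = map_pmf (\<lambda>v. c \<union> v) Q"
definition J where "J = map_pmf (\<lambda>(a,v). (a, a \<union> v)) (pair_pmf \<pi> Q)"
definition post where "post w = map_pmf fst (cond_pmf J {y. w = snd y})"
definition P where "P = bind_pmf (pair_pmf \<pi> Q) (\<lambda>(a,v). map_pmf (\<lambda>a'. (a,a',v)) (post (a \<union> v)))"
definition Z where "Z w = (\<Sum>b\<in>Pow X. if b \<subseteq> w then pmf \<pi> b / p ^ card b else 0)"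
definition H where "H c = (\<Sum>w\<in>Pow X. if c \<subseteq> w then pmf Q w / Z w else 0) / p ^ card c"
definition PA where "PA = map_pmf (\<lambda>(A,A',V). (A,A')) P"

lemma wt_nonneg[simp]: "0 \<le> pmf \<pi> b / p ^ n"
  using p0 by simp

lemma ppow_pos[simp]: "0 < p ^ n"
  using p0 by simp

lemma setpi: "set_pmf \<pi> \<subseteq> Pow X"
  using spr unfolding spread_def random_subset_of_def by auto

lemma setQ: "set_pmf Q \<subseteq> Pow X" by (rule set_Qp)

lemma finPow: "finite (Pow X)" using finX by simp

lemma setJ: "set_pmf J \<subseteq> Pow X \<times> Pow X"
  using setpi setQ unfolding J_def by auto

lemma setJ_sub: "(a,w) \<in> set_pmf J \<Longrightarrow> a \<subseteq> w"
  unfolding J_def by auto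

lemma pmfM: "c \<subseteq> X \<Longrightarrow> pmf (M c) w = (if c \<subseteq> w \<and> w \<subseteq> X then pmf Q w / p ^ card c else 0)"
  unfolding M_def using pmf_Qp_union[OF finX _ p0 p1] by simp

lemma pmf_Pair_map: "pmf (map_pmf (Pair b) N) (a, w) = (if b = a then pmf N w else 0)"
proof (cases "b = a")
  case True
  then show ?thesis by (simp add: pmf_map_inj' inj_on_def)
next
  case False
  then have "(a, w) \<notin> Pair b ` set_pmf N" by auto
  then show ?thesis using False by (simp add: pmf_map_outside)
qed

lemma pmfJ: "pmf J (a,w) = pmf \<pi> a * pmf (M a) w"
proof -
  have "J = bind_pmf \<pi> (\<lambda>b. map_pmf (Pair b) (M b))"
    unfolding J_def M_def pair_pmf_def
    by (simp add: map_bind_pmf map_pmf_comp bind_return_pmf map_pmf_def[symmetric])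
  then have "pmf J (a,w) = (\<integral>b. pmf (map_pmf (Pair b) (M b)) (a,w) \<partial>\<pi>)"
    by (simp add: pmf_bind)
  also have "\<dots> = (\<integral>b. (if b = a then pmf (M b) w else 0) \<partial>\<pi>)"
    by (simp add: pmf_Pair_map)
  also have "\<dots> = (\<Sum>b\<in>{a}. (if b = a then pmf (M b) w else 0) * pmf \<pi> b)"
    by (rule integral_measure_pmf_real) (auto split: if_splits)
  finally show ?thesis by simp
qed

lemma pmfJ': "a \<in> Pow X \<Longrightarrow> w \<in> Pow X \<Longrightarrow>
   pmf J (a,w) = (if a \<subseteq> w then pmf \<pi> a * pmf Q w / p ^ card a else 0)"
  by (simp add: pmfJ pmfM)

lemma measure_fin: "finite T \<Longrightarrow> set_pmf N \<subseteq> T \<Longrightarrow> measure N A = (\<Sum>y\<in>A \<inter> T. pmf N y)"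
proof -
  assume T: "finite T" "set_pmf N \<subseteq> T"
  have "measure N A = measure N (A \<inter> set_pmf N)" by (rule measure_Int_set_pmf[symmetric])
  also have "A \<inter> set_pmf N = (A \<inter> T) \<inter> set_pmf N" using T by auto
  also have "measure N \<dots> = measure N (A \<inter> T)" by (rule measure_Int_set_pmf)
  also have "\<dots> = (\<Sum>y\<in>A \<inter> T. pmf N y)" using T by (simp add: measure_measure_pmf_finite)
  finally show ?thesis .
qed

lemma Z_nonneg: "Z w \<ge> 0"
  unfolding Z_def by (intro sum_nonneg) auto

lemma Z_mono: "w \<subseteq> w' \<Longrightarrow> Z w \<le> Z w'"
  unfolding Z_def by (intro sum_mono) auto

lemma Z_ge: "a \<in> Pow X \<Longrightarrow> a \<subseteq> w \<Longrightarrow> Z w \<ge> pmf \<pi> a / p ^ card a"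
proof -
  assume a: "a \<in> Pow X" "a \<subseteq> w"
  have "pmf \<pi> a / p ^ card a = (if a \<subseteq> w then pmf \<pi> a / p ^ card a else 0)" using a by simp
  also have "\<dots> \<le> Z w" unfolding Z_def
    by (rule member_le_sum) (use a finPow in auto)
  finally show ?thesis .
qed

lemma JW: "w \<in> Pow X \<Longrightarrow> measure J {y. w = snd y} = pmf Q w * Z w"
proof -
  assume w: "w \<in> Pow X"
  have "measure J {y. w = snd y} = (\<Sum>y\<in>{y. w = snd y} \<inter> (Pow X \<times> Pow X). pmf J y)"
    by (rule measure_fin) (use finPow setJ in auto)
  also have "{y. w = snd y} \<inter> (Pow X \<times> Pow X) = (\<lambda>b. (b,w)) ` Pow X" using w by auto
  also have "(\<Sum>y\<in>(\<lambda>b. (b,w)) ` Pow X. pmf J y) = (\<Sum>b\<in>Pow X. pmf J (b,w))"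
    by (subst sum.reindex) (auto simp: inj_on_def)
  also have "\<dots> = (\<Sum>b\<in>Pow X. pmf Q w * (if b \<subseteq> w then pmf \<pi> b / p ^ card b else 0))"
    using w by (intro sum.cong) (auto simp: pmfJ')
  also have "\<dots> = pmf Q w * Z w" unfolding Z_def by (simp add: sum_distrib_left)
  finally show ?thesis .
qed

lemma post_nonempty: "(a0,w) \<in> set_pmf J \<Longrightarrow> set_pmf J \<inter> {y. w = snd y} \<noteq> {}"
  by auto

lemma post_pmf:
  assumes "(a0,w) \<in> set_pmf J"
  shows "pmf (post w) a' = pmf J (a',w) / measure J {y. w = snd y}"
proof -
  have ne: "set_pmf J \<inter> {y. w = snd y} \<noteq> {}" using assms by auto
  have "pmf (post w) a' = pmf (map_pmf fst (cond_pmf J {y. w = snd y})) (fst (a',w))"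
    unfolding post_def by simp
  also have "\<dots> = pmf (cond_pmf J {y. w = snd y}) (a',w)"
    by (rule pmf_map_inj_on_superset[of _ "{y. w = snd y}"]) (use ne in \<open>auto simp: inj_on_def\<close>)
  also have "\<dots> = pmf J (a',w) / measure J {y. w = snd y}"
    using ne by (simp add: pmf_cond)
  finally show ?thesis .
qed

lemma post_set:
  assumes "(a0,w) \<in> set_pmf J" "a' \<in> set_pmf (post w)"
  shows "(a',w) \<in> set_pmf J"
proof -
  have ne: "set_pmf J \<inter> {y. w = snd y} \<noteq> {}" using assms by auto
  show ?thesis using assms(2) ne unfolding post_def by auto
qed

lemma P_alt: "P = bind_pmf (pair_pmf \<pi> Q) (\<lambda>y. map_pmf (\<lambda>a'. (fst y, a', snd y)) (post (fst y \<union> snd y)))"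
  unfolding P_def by (rule bind_pmf_cong) (auto simp: split_beta)

lemma PA_eq: "PA = bind_pmf J (\<lambda>y. map_pmf (Pair (fst y)) (post (snd y)))"
  unfolding PA_def P_alt J_def
  by (simp add: map_bind_pmf map_pmf_comp bind_map_pmf case_prod_beta)

lemma marg_A: "map_pmf (\<lambda>(A, A', V). A) P = \<pi>"
  unfolding P_alt by (simp add: map_bind_pmf map_pmf_comp case_prod_beta map_pmf_def[symmetric] map_fst_pair_pmf)

lemma marg_AV: "map_pmf (\<lambda>(A, A', V). (A, V)) P = pair_pmf \<pi> Q"
  unfolding P_alt by (simp add: map_bind_pmf map_pmf_comp case_prod_beta map_pmf_def[symmetric])

lemma marg_V: "map_pmf (\<lambda>(A, A', V). V) P = Q"
  unfolding P_alt by (simp add: map_bind_pmf map_pmf_comp case_prod_beta map_pmf_def[symmetric] map_snd_pair_pmf)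

lemma marg_A': "map_pmf (\<lambda>(A, A', V). A') P = \<pi>"
proof -
  have "map_pmf (\<lambda>(A, A', V). A') P = bind_pmf J (\<lambda>y. post (snd y))"
    unfolding P_alt J_def by (simp add: map_bind_pmf map_pmf_comp bind_map_pmf case_prod_beta)
  also have "\<dots> = bind_pmf J (\<lambda>y. map_pmf fst (cond_pmf J {z. snd y = snd z}))"
    unfolding post_def by simp
  also have "\<dots> = map_pmf fst (bind_pmf J (\<lambda>y. cond_pmf J {z. snd y = snd z}))"
    by (simp add: map_bind_pmf)
  also have "bind_pmf J (\<lambda>y. cond_pmf J {z. snd y = snd z}) = J"
    by (rule bind_cond_pmf_cancel) (auto intro!: arg_cong[where f="measure J"])
  also have "map_pmf fst J = \<pi>"
    unfolding J_def by (simp add: map_pmf_comp case_prod_beta map_fst_pair_pmf)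
  finally show ?thesis .
qed

lemma pmfPA: "pmf PA (a,a') = (\<Sum>w\<in>Pow X. pmf J (a,w) * pmf (post w) a')"
proof -
  have "pmf PA (a,a') = (\<integral>y. pmf (map_pmf (Pair (fst y)) (post (snd y))) (a,a') \<partial>J)"
    unfolding PA_eq by (simp add: pmf_bind)
  also have "\<dots> = (\<Sum>y\<in>Pow X \<times> Pow X. pmf (map_pmf (Pair (fst y)) (post (snd y))) (a,a') * pmf J y)"
    by (rule integral_measure_pmf_real) (use finPow setJ in auto)
  also have "\<dots> = (\<Sum>b\<in>Pow X. \<Sum>w\<in>Pow X. (if b = a then pmf (post w) a' else 0) * pmf J (b,w))"
    by (subst sum.cartesian_product) (auto simp: pmf_Pair_map split_beta intro!: sum.cong)
  also have "\<dots> = (\<Sum>w\<in>Pow X. \<Sum>b\<in>Pow X. (if b = a then pmf (post w) a' * pmf J (b,w) else 0))"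
    by (subst sum.swap) (auto intro!: sum.cong)
  also have "\<dots> = (\<Sum>w\<in>Pow X. pmf J (a,w) * pmf (post w) a')"
  proof (intro sum.cong refl)
    fix w assume w: "w \<in> Pow X"
    show "(\<Sum>b\<in>Pow X. (if b = a then pmf (post w) a' * pmf J (b,w) else 0)) = pmf J (a,w) * pmf (post w) a'"
    proof (cases "a \<in> Pow X")
      case True
      then show ?thesis using finPow by (simp add: sum.delta')
    next
      case False
      then have "pmf J (a,w) = 0" using setJ by (auto simp: pmf_eq_0_set_pmf)
      then show ?thesis using False finPow by (simp add: sum.delta')
    qed
  qed
  finally show ?thesis .
qed

lemma H_integral: "c \<subseteq> X \<Longrightarrow> H c = (\<integral>v. 1 / Z (c \<union> v) \<partial>Q)"
proof -
  assume c: "c \<subseteq> X"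
  have "(\<integral>v. 1 / Z (c \<union> v) \<partial>Q) = (\<integral>w. 1 / Z w \<partial>M c)"
    unfolding M_def by simp
  also have "\<dots> = (\<Sum>w\<in>Pow X. 1 / Z w * pmf (M c) w)"
    by (rule integral_measure_pmf_real) (use finPow setQ c in \<open>auto simp: M_def\<close>)
  also have "\<dots> = (\<Sum>w\<in>Pow X. (if c \<subseteq> w then pmf Q w / Z w else 0) / p ^ card c)"
    using c by (intro sum.cong) (auto simp: pmfM)
  also have "\<dots> = H c" unfolding H_def by (simp add: sum_divide_distrib)
  finally show ?thesis by simp
qed

lemma H_nonneg: "H c \<ge> 0"
  unfolding H_def by (intro divide_nonneg_pos sum_nonneg) (auto intro!: divide_nonneg_nonneg Z_nonneg)

lemma H_mono:
  assumes "a \<in> Pow X" "a' \<in> Pow X" "pmf \<pi> a > 0"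
  shows "H (a \<union> a') \<le> H a"
proof -
  have finQ: "finite (set_pmf Q)" using finPow setQ by (rule finite_subset[rotated])
  have "(\<integral>v. 1 / Z ((a \<union> a') \<union> v) \<partial>Q) \<le> (\<integral>v. 1 / Z (a \<union> v) \<partial>Q)"
  proof (rule integral_mono)
    show "integrable Q (\<lambda>v. 1 / Z ((a \<union> a') \<union> v))" by (rule integrable_measure_pmf_finite[OF finQ])
    show "integrable Q (\<lambda>v. 1 / Z (a \<union> v))" by (rule integrable_measure_pmf_finite[OF finQ])
    fix v
    have pos: "0 < pmf \<pi> a / p ^ card a" using assms by simp
    have z1: "pmf \<pi> a / p ^ card a \<le> Z (a \<union> v)" by (rule Z_ge) (use assms in auto)
    have z2: "Z (a \<union> v) \<le> Z ((a \<union> a') \<union> v)" by (rule Z_mono) auto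
    show "1 / Z ((a \<union> a') \<union> v) \<le> 1 / Z (a \<union> v)"
      using pos z1 z2 by (intro divide_left_mono) auto
  qed
  then show ?thesis using assms by (simp add: H_integral)
qed

lemma sumH: "(\<Sum>a\<in>Pow X. pmf \<pi> a * H a) \<le> 1"
proof -
  have "(\<Sum>a\<in>Pow X. pmf \<pi> a * H a) =
        (\<Sum>a\<in>Pow X. \<Sum>w\<in>Pow X. if a \<subseteq> w then pmf \<pi> a / p ^ card a * (pmf Q w / Z w) else 0)"
    unfolding H_def by (auto simp: sum_distrib_left sum_divide_distrib intro!: sum.cong)
  also have "\<dots> = (\<Sum>w\<in>Pow X. \<Sum>a\<in>Pow X. if a \<subseteq> w then pmf \<pi> a / p ^ card a * (pmf Q w / Z w) else 0)"
    by (rule sum.swap)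
  also have "\<dots> = (\<Sum>w\<in>Pow X. (\<Sum>a\<in>Pow X. if a \<subseteq> w then pmf \<pi> a / p ^ card a else 0) * (pmf Q w / Z w))"
    by (rule sum.cong[OF refl], subst sum_distrib_right, rule sum.cong[OF refl], simp)
  also have "\<dots> = (\<Sum>w\<in>Pow X. Z w * (pmf Q w / Z w))"
    by (simp only: Z_def[symmetric])
  also have "\<dots> \<le> (\<Sum>w\<in>Pow X. pmf Q w)"
    by (intro sum_mono) (auto simp: Z_nonneg)
  also have "\<dots> = 1" by (rule sum_pmf_eq_1[OF finPow setQ])
  finally show ?thesis .
qed

lemma PA_term:
  assumes a: "a \<in> Pow X" "a' \<in> Pow X" and w: "w \<in> Pow X"
  shows "pmf J (a,w) * pmf (post w) a' =
    (if a \<union> a' \<subseteq> w then (pmf \<pi> a * pmf \<pi> a' / (p ^ card a * p ^ card a')) * (pmf Q w / Z w) else 0)"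
proof (cases "pmf J (a,w) = 0")
  case True
  then show ?thesis using a w by (auto simp: pmfJ' split: if_splits)
next
  case False
  then have aw: "(a,w) \<in> set_pmf J" by (simp add: pmf_eq_0_set_pmf)
  have sub: "a \<subseteq> w" using setJ_sub[OF aw] .
  have pa: "pmf \<pi> a \<noteq> 0" "pmf Q w \<noteq> 0" using False a w sub by (auto simp: pmfJ')
  have zpos: "Z w > 0"
  proof -
    have "0 < pmf \<pi> a" using pa(1) pmf_nonneg[of \<pi> a] by linarith
    then have "pmf \<pi> a / p ^ card a > 0" by simp
    also have "\<dots> \<le> Z w" by (rule Z_ge[OF a(1) sub])
    finally show ?thesis .
  qed
  have post: "pmf (post w) a' = pmf J (a',w) / (pmf Q w * Z w)"
    using post_pmf[OF aw] JW[OF w] by simp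
  show ?thesis
  proof (cases "a' \<subseteq> w")
    case True
    have j1: "pmf J (a,w) = pmf \<pi> a * pmf Q w / p ^ card a" using a w sub by (simp add: pmfJ')
    have j2: "pmf J (a',w) = pmf \<pi> a' * pmf Q w / p ^ card a'" using a w True by (simp add: pmfJ')
    have alg: "\<And>x y q z pa pb::real. q \<noteq> 0 \<Longrightarrow> z \<noteq> 0 \<Longrightarrow> pa \<noteq> 0 \<Longrightarrow> pb \<noteq> 0 \<Longrightarrow>
        (x * q / pa) * ((y * q / pb) / (q * z)) = x * y / (pa * pb) * (q / z)"
      by (simp add: field_simps)
    have "pmf J (a,w) * pmf (post w) a' = pmf \<pi> a * pmf \<pi> a' / (p ^ card a * p ^ card a') * (pmf Q w / Z w)"
      unfolding post j1 j2 by (rule alg) (use pa zpos p0 in auto)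
    then show ?thesis using sub True by simp
  next
    case False
    then show ?thesis using a w by (simp add: post pmfJ')
  qed
qed

lemma PA_formula:
  assumes a: "a \<in> Pow X" "a' \<in> Pow X"
  shows "pmf PA (a,a') = pmf \<pi> a * pmf \<pi> a' * H (a \<union> a') / p ^ card (a \<inter> a')"
proof -
  define C where "C = pmf \<pi> a * pmf \<pi> a' / (p ^ card a * p ^ card a')"
  have "pmf PA (a,a') = (\<Sum>w\<in>Pow X. if a \<union> a' \<subseteq> w then C * (pmf Q w / Z w) else 0)"
    unfolding pmfPA C_def by (intro sum.cong refl PA_term a)
  also have "\<dots> = C * (\<Sum>w\<in>Pow X. if a \<union> a' \<subseteq> w then pmf Q w / Z w else 0)"
    by (subst sum_distrib_left) (auto intro!: sum.cong)
  also have "\<dots> = C * p ^ card (a \<union> a') * H (a \<union> a')"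
    unfolding H_def using p0 by simp
  also have "C * p ^ card (a \<union> a') = pmf \<pi> a * pmf \<pi> a' / p ^ card (a \<inter> a')"
  proof -
    have fa: "finite a" "finite a'" using a finX by (auto intro: finite_subset)
    have "p ^ card a * p ^ card a' = p ^ card (a \<union> a') * p ^ card (a \<inter> a')"
      by (simp add: power_add[symmetric] card_Un_Int[OF fa])
    then show ?thesis unfolding C_def using p0 by (simp add: field_simps)
  qed
  finally show ?thesis by simp
qed

end


context setting begin

lemma spread_T: "T \<subseteq> X \<Longrightarrow> (\<Sum>a'\<in>Pow X. if T \<subseteq> a' then pmf \<pi> a' else 0) \<le> inverse (R ^ card T)"
proof -
  assume T: "T \<subseteq> X"
  have "(\<Sum>a'\<in>Pow X. if T \<subseteq> a' then pmf \<pi> a' else 0) = (\<Sum>a'\<in>{A. T \<subseteq> A} \<inter> Pow X. pmf \<pi> a')"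
  proof -
    have "{A. T \<subseteq> A} \<inter> Pow X = {x \<in> Pow X. T \<subseteq> x}" by auto
    then show ?thesis by (simp only:) (rule sum.inter_filter[OF finPow, symmetric])
  qed
  also have "\<dots> = measure \<pi> {A. T \<subseteq> A}"
    by (rule measure_fin[symmetric]) (use finPow setpi in auto)
  also have "\<dots> \<le> inverse (R ^ card T)"
    using spr T unfolding spread_def by auto
  finally show ?thesis .
qed

lemma spread_sum:
  assumes a: "a \<in> Pow X" and mu: "\<mu> \<ge> 1"
  shows "(\<Sum>a'\<in>Pow X. pmf \<pi> a' * \<mu> ^ card (a \<inter> a')) \<le> (1 + (\<mu> - 1) / R) ^ card a"
proof -
  have fa: "finite a" using a finX by (auto intro: finite_subset)
  have "(\<Sum>a'\<in>Pow X. pmf \<pi> a' * \<mu> ^ card (a \<inter> a')) =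
        (\<Sum>a'\<in>Pow X. pmf \<pi> a' * (\<Sum>T\<in>Pow (a \<inter> a'). (\<mu> - 1) ^ card T))"
  proof (intro sum.cong refl)
    fix a' show "pmf \<pi> a' * \<mu> ^ card (a \<inter> a') = pmf \<pi> a' * (\<Sum>T\<in>Pow (a \<inter> a'). (\<mu> - 1) ^ card T)"
      using subset_binom[of "a \<inter> a'" "\<mu> - 1"] fa by simp
  qed
  also have "\<dots> = (\<Sum>a'\<in>Pow X. \<Sum>T\<in>Pow a. if T \<subseteq> a' then pmf \<pi> a' * (\<mu> - 1) ^ card T else 0)"
  proof (intro sum.cong refl)
    fix a'
    have "Pow (a \<inter> a') = {T \<in> Pow a. T \<subseteq> a'}" by auto
    then show "pmf \<pi> a' * (\<Sum>T\<in>Pow (a \<inter> a'). (\<mu> - 1) ^ card T) =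
          (\<Sum>T\<in>Pow a. if T \<subseteq> a' then pmf \<pi> a' * (\<mu> - 1) ^ card T else 0)"
      using fa by (simp add: sum.inter_filter[symmetric] sum_distrib_left)
  qed
  also have "\<dots> = (\<Sum>T\<in>Pow a. \<Sum>a'\<in>Pow X. if T \<subseteq> a' then pmf \<pi> a' * (\<mu> - 1) ^ card T else 0)"
    by (rule sum.swap)
  also have "\<dots> = (\<Sum>T\<in>Pow a. (\<mu> - 1) ^ card T * (\<Sum>a'\<in>Pow X. if T \<subseteq> a' then pmf \<pi> a' else 0))"
    by (intro sum.cong refl) (auto simp: sum_distrib_left intro!: sum.cong)
  also have "\<dots> \<le> (\<Sum>T\<in>Pow a. (\<mu> - 1) ^ card T * inverse (R ^ card T))"
  proof (intro sum_mono mult_left_mono)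
    fix T assume "T \<in> Pow a"
    then show "(\<Sum>a'\<in>Pow X. if T \<subseteq> a' then pmf \<pi> a' else 0) \<le> inverse (R ^ card T)"
      using a by (intro spread_T) auto
    show "0 \<le> (\<mu> - 1) ^ card T" using mu by simp
  qed
  also have "\<dots> = (\<Sum>T\<in>Pow a. ((\<mu> - 1) / R) ^ card T)"
    by (intro sum.cong refl) (simp add: divide_inverse power_mult_distrib power_inverse)
  also have "\<dots> = (1 + (\<mu> - 1) / R) ^ card a"
    by (rule subset_binom[symmetric, OF fa])
  finally show ?thesis .
qed

lemma bad_bound:
  assumes a: "a \<in> Pow X" "a \<noteq> {}" and eps: "0 < \<epsilon>" "1 / (p * R) \<le> \<epsilon>" "exp 1 * (1 / (p * R)) / \<epsilon> \<le> 1"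
  shows "(\<Sum>a'\<in>Pow X. pmf \<pi> a' * (if nat \<lfloor>\<epsilon> * card a\<rfloor> + 1 \<le> card (a \<inter> a') then 1 else 0) / p ^ card (a \<inter> a'))
          \<le> exp 1 * (1 / (p * R)) / \<epsilon>"
proof -
  define r where "r = 1 / (p * R)"
  define k where "k = card a"
  define s where "s = nat \<lfloor>\<epsilon> * k\<rfloor> + 1"
  have fa: "finite a" using a finX by (auto intro: finite_subset)
  have kpos: "k > 0" unfolding k_def using fa a by (simp add: card_gt_0_iff)
  have rpos: "r > 0" unfolding r_def using p0 R1 by simp
  have s1: "s \<ge> 1" unfolding s_def by simp
  have sk: "\<epsilon> * k \<le> s"
  proof -
    have "\<epsilon> * k < real_of_int \<lfloor>\<epsilon> * k\<rfloor> + 1" by linarith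
    also have "real_of_int \<lfloor>\<epsilon> * k\<rfloor> = real (nat \<lfloor>\<epsilon> * k\<rfloor>)"
      using eps kpos by simp
    finally show ?thesis unfolding s_def by simp
  qed
  define l where "l = s / (k * r)"
  have lpos: "l > 0" unfolding l_def using kpos rpos s1 by simp
  have l1: "l \<ge> 1"
  proof -
    have "\<epsilon> / r \<le> l" unfolding l_def using sk kpos rpos
      by (simp add: field_simps)
    moreover have "1 \<le> \<epsilon> / r"
    proof -
      have "r \<le> \<epsilon>" using eps unfolding r_def by simp
      then show ?thesis using rpos by simp
    qed
    ultimately show ?thesis by linarith
  qed
  have ind: "\<And>m::nat. (if s \<le> m then 1 else 0) \<le> l ^ m / l ^ s"
  proof -
    fix m :: nat
    show "(if s \<le> m then 1 else 0) \<le> l ^ m / l ^ s"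
    proof (cases "s \<le> m")
      case True
      then have "l ^ s \<le> l ^ m" using l1 by (simp add: power_increasing)
      then show ?thesis using True lpos by simp
    qed (use lpos in simp)
  qed
  have "(\<Sum>a'\<in>Pow X. pmf \<pi> a' * (if s \<le> card (a \<inter> a') then 1 else 0) / p ^ card (a \<inter> a'))
      \<le> (\<Sum>a'\<in>Pow X. pmf \<pi> a' * (l ^ card (a \<inter> a') / l ^ s) / p ^ card (a \<inter> a'))"
    by (intro sum_mono divide_right_mono mult_left_mono ind) (auto simp: less_imp_le)
  also have "\<dots> = (\<Sum>a'\<in>Pow X. pmf \<pi> a' * (l / p) ^ card (a \<inter> a')) / l ^ s"
    by (simp add: sum_divide_distrib power_divide mult.commute)
  also have "\<dots> \<le> (1 + (l / p - 1) / R) ^ k / l ^ s"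
    unfolding k_def
  proof (intro divide_right_mono spread_sum a)
    show "1 \<le> l / p" using l1 p0 p1 by (simp add: field_simps)
  qed (use lpos in simp)
  also have "\<dots> \<le> (1 + s / k) ^ k / l ^ s"
  proof (intro divide_right_mono power_mono)
    have "(l / p - 1) / R \<le> (l / p) / R" using R1 by (intro divide_right_mono) auto
    also have "(l / p) / R = s / k"
      unfolding l_def r_def using p0 R1 kpos by (simp add: field_simps)
    finally show "1 + (l / p - 1) / R \<le> 1 + s / k" by simp
    have "0 < R * p" using p0 R1 by simp
    then have h: "p \<le> l + R * p" using l1 p1 by linarith
    show "0 \<le> 1 + (l / p - 1) / R" using h p0 R1 by (simp add: field_simps)
  qed (use lpos in simp)
  also have "\<dots> \<le> exp (s / k) ^ k / l ^ s"
    by (intro divide_right_mono power_mono) (use lpos in \<open>auto simp: exp_ge_add_one_self add.commute\<close>)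
  also have "exp (s / k) ^ k = exp 1 ^ s"
    using kpos by (simp add: exp_of_nat_mult[symmetric] exp_of_nat_mult)
  also have "exp 1 ^ s / l ^ s = (exp 1 / l) ^ s" by (simp add: power_divide)
  also have "\<dots> \<le> (exp 1 / l) ^ 1"
  proof (rule power_decreasing[OF s1])
    show "0 \<le> exp 1 / l" using lpos by simp
    have "exp 1 / l = exp 1 * r * (k / s)" unfolding l_def using kpos rpos s1 by (simp add: field_simps)
    also have "\<dots> \<le> exp 1 * r * (1 / \<epsilon>)"
      using sk kpos s1 eps rpos by (intro mult_left_mono) (auto simp: field_simps)
    finally have *: "exp 1 / l \<le> exp 1 * r / \<epsilon>" by simp
    then show "exp 1 / l \<le> 1" using eps unfolding r_def by linarith
  qed
  also have "\<dots> \<le> exp 1 * r / \<epsilon>"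
  proof -
    have "exp 1 / l = exp 1 * r * (k / s)" unfolding l_def using kpos rpos s1 by (simp add: field_simps)
    also have "\<dots> \<le> exp 1 * r * (1 / \<epsilon>)"
      using sk kpos s1 eps rpos by (intro mult_left_mono) (auto simp: field_simps)
    finally show ?thesis by simp
  qed
  finally show ?thesis unfolding s_def k_def r_def .
qed

end


context setting begin

definition f3 :: "'a set \<times> 'a set \<times> 'a set \<Rightarrow> real" where
  "f3 = (\<lambda>(A, A', V). if A \<noteq> {} then real (card (A' - V)) / real (card A) else 0)"

lemma setP: "x \<in> set_pmf P \<Longrightarrow> fst x \<in> Pow X \<and> fst (snd x) \<in> Pow X \<and> snd (snd x) \<in> Pow X \<and> fst (snd x) \<subseteq> fst x \<union> snd (snd x)"
proof -
  assume "x \<in> set_pmf P"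
  then obtain y a' where y: "y \<in> set_pmf (pair_pmf \<pi> Q)" "a' \<in> set_pmf (post (fst y \<union> snd y))"
    and x: "x = (fst y, a', snd y)"
    unfolding P_alt by auto
  have yJ: "(fst y, fst y \<union> snd y) \<in> set_pmf J" using y(1) unfolding J_def by (force simp: split_beta)
  have "(a', fst y \<union> snd y) \<in> set_pmf J" by (rule post_set[OF yJ y(2)])
  then have "a' \<in> Pow X" "a' \<subseteq> fst y \<union> snd y" using setJ setJ_sub by auto
  moreover have "fst y \<in> Pow X" "snd y \<in> Pow X" using y(1) setpi setQ by (auto simp: mem_Times_iff)
  ultimately show ?thesis using x by auto
qed

lemma finP: "finite (set_pmf P)"
proof (rule finite_subset)
  show "set_pmf P \<subseteq> Pow X \<times> Pow X \<times> Pow X" using setP by force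
  show "finite (Pow X \<times> Pow X \<times> Pow X)" using finPow by simp
qed

lemma finPA: "finite (set_pmf PA)" unfolding PA_def using finP by simp

lemma setPA: "set_pmf PA \<subseteq> Pow X \<times> Pow X" unfolding PA_def using setP by force

lemma E_le1: "measure_pmf.expectation P f3 \<le> 1"
proof -
  have "measure_pmf.expectation P f3 \<le> measure_pmf.expectation P (\<lambda>_. 1)"
  proof (rule integral_mono_AE)
    show "integrable P f3" by (rule integrable_measure_pmf_finite[OF finP])
    show "integrable P (\<lambda>_. 1::real)" by simp
    show "AE x in P. f3 x \<le> 1"
      unfolding AE_measure_pmf_iff
    proof
      fix x assume x: "x \<in> set_pmf P"
      obtain a a' v where xe: "x = (a, a', v)" by (cases x) auto
      have s: "a \<in> Pow X" "a' \<subseteq> a \<union> v" using setP[OF x] xe by auto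
      have fa: "finite a" using s finX by (auto intro: finite_subset)
      have "card (a' - v) \<le> card a" using s fa by (intro card_mono) auto
      then show "f3 x \<le> 1" unfolding f3_def xe by (auto simp: divide_le_eq_1)
    qed
  qed
  then show ?thesis by simp
qed

definition g2 :: "'a set \<times> 'a set \<Rightarrow> real" where
  "g2 = (\<lambda>(a, a'). if a \<noteq> {} then real (card (a \<inter> a')) / real (card a) else 0)"

lemma E_le_g: "measure_pmf.expectation P f3 \<le> measure_pmf.expectation PA g2"
proof -
  have "measure_pmf.expectation P f3 \<le> measure_pmf.expectation P (\<lambda>x. g2 (fst x, fst (snd x)))"
  proof (rule integral_mono_AE)
    show "integrable P f3" by (rule integrable_measure_pmf_finite[OF finP])
    show "integrable P (\<lambda>x. g2 (fst x, fst (snd x)))" by (rule integrable_measure_pmf_finite[OF finP])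
    show "AE x in P. f3 x \<le> g2 (fst x, fst (snd x))"
      unfolding AE_measure_pmf_iff
    proof
      fix x assume x: "x \<in> set_pmf P"
      obtain a a' v where xe: "x = (a, a', v)" by (cases x) auto
      have s: "a \<in> Pow X" "a' \<subseteq> a \<union> v" using setP[OF x] xe by auto
      have fa: "finite a" using s finX by (auto intro: finite_subset)
      have "card (a' - v) \<le> card (a \<inter> a')" using s fa by (intro card_mono) auto
      then show "f3 x \<le> g2 (fst x, fst (snd x))" unfolding f3_def g2_def xe
        by (auto intro!: divide_right_mono)
    qed
  qed
  also have "\<dots> = measure_pmf.expectation PA g2"
    unfolding PA_def by (simp add: split_beta)
  finally show ?thesis .
qed

lemma E_bound:
  assumes eps: "0 < \<epsilon>" "1 / (p * R) \<le> \<epsilon>" "exp 1 * (1 / (p * R)) / \<epsilon> \<le> 1"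
  shows "measure_pmf.expectation P f3 \<le> \<epsilon> + exp 1 * (1 / (p * R)) / \<epsilon>"
proof -
  define q where "q = exp 1 * (1 / (p * R)) / \<epsilon>"
  define bad where "bad = (\<lambda>(a::'a set, a'::'a set). if a \<noteq> {} \<and> nat \<lfloor>\<epsilon> * card a\<rfloor> + 1 \<le> card (a \<inter> a') then 1 else (0::real))"
  have gb: "g2 y \<le> \<epsilon> + bad y" for y
  proof -
    obtain a a' where ye: "y = (a, a')" by (cases y) auto
    show ?thesis
    proof (cases "a \<noteq> {} \<and> nat \<lfloor>\<epsilon> * card a\<rfloor> + 1 \<le> card (a \<inter> a')")
      case True
      have "real (card (a \<inter> a')) / real (card a) \<le> 1"
      proof (cases "finite a")
        case True
        then have "card (a \<inter> a') \<le> card a" by (intro card_mono) auto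
        then show ?thesis by (cases "card a = 0") (auto simp: divide_le_eq_1)
      next
        case False then show ?thesis by simp
      qed
      then show ?thesis using True eps unfolding g2_def bad_def ye by auto
    next
      case False
      show ?thesis
      proof (cases "a = {}")
        case True then show ?thesis using eps unfolding g2_def bad_def ye by auto
      next
        case ne: False
        then have lt: "card (a \<inter> a') \<le> nat \<lfloor>\<epsilon> * card a\<rfloor>" using False by auto
        have "real (card (a \<inter> a')) \<le> \<epsilon> * card a"
        proof -
          have "real (card (a \<inter> a')) \<le> real (nat \<lfloor>\<epsilon> * card a\<rfloor>)" using lt by simp
          also have "\<dots> \<le> \<epsilon> * card a"
          proof -
            have x0: "0 \<le> \<epsilon> * real (card a)" using eps by simp
            then have "real (nat \<lfloor>\<epsilon> * card a\<rfloor>) = real_of_int \<lfloor>\<epsilon> * card a\<rfloor>" by simp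
            also have "\<dots> \<le> \<epsilon> * card a" by (rule of_int_floor_le)
            finally show ?thesis .
          qed
          finally show ?thesis .
        qed
        moreover have "card a > 0 \<or> card a = 0" by auto
        ultimately have "real (card (a \<inter> a')) / real (card a) \<le> \<epsilon>"
          using eps by (auto simp: divide_le_eq)
        then show ?thesis using False ne unfolding g2_def bad_def ye by auto
      qed
    qed
  qed
  have "measure_pmf.expectation PA g2 = (\<Sum>y\<in>Pow X \<times> Pow X. g2 y * pmf PA y)"
    by (rule integral_measure_pmf_real) (use finPow setPA in auto)
  also have "\<dots> \<le> (\<Sum>y\<in>Pow X \<times> Pow X. (\<epsilon> + bad y) * pmf PA y)"
    by (intro sum_mono mult_right_mono gb) auto
  also have "\<dots> = \<epsilon> * (\<Sum>y\<in>Pow X \<times> Pow X. pmf PA y) + (\<Sum>y\<in>Pow X \<times> Pow X. bad y * pmf PA y)"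
    by (simp add: algebra_simps sum.distrib sum_distrib_left)
  also have "(\<Sum>y\<in>Pow X \<times> Pow X. pmf PA y) = 1"
    by (rule sum_pmf_eq_1) (use finPow setPA in auto)
  also have "(\<Sum>y\<in>Pow X \<times> Pow X. bad y * pmf PA y) = (\<Sum>a\<in>Pow X. \<Sum>a'\<in>Pow X. bad (a,a') * pmf PA (a,a'))"
    by (simp add: sum.cartesian_product)
  also have "\<dots> \<le> (\<Sum>a\<in>Pow X. pmf \<pi> a * H a * (\<Sum>a'\<in>Pow X. pmf \<pi> a' * bad (a,a') / p ^ card (a \<inter> a')))"
  proof (intro sum_mono)
    fix a assume a: "a \<in> Pow X"
    have "(\<Sum>a'\<in>Pow X. bad (a,a') * pmf PA (a,a')) \<le> (\<Sum>a'\<in>Pow X. pmf \<pi> a * H a * (pmf \<pi> a' * bad (a,a') / p ^ card (a \<inter> a')))"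
    proof (intro sum_mono)
      fix a' assume a': "a' \<in> Pow X"
      have b0: "0 \<le> bad (a,a')" unfolding bad_def by auto
      have "pmf PA (a,a') \<le> pmf \<pi> a * pmf \<pi> a' * H a / p ^ card (a \<inter> a')"
      proof (cases "pmf \<pi> a = 0")
        case True then show ?thesis by (simp add: PA_formula[OF a a'])
      next
        case False
        then have "pmf \<pi> a > 0" using pmf_nonneg[of \<pi> a] by linarith
        then have "H (a \<union> a') \<le> H a" by (rule H_mono[OF a a'])
        then show ?thesis unfolding PA_formula[OF a a']
          by (intro divide_right_mono mult_left_mono) (auto intro: less_imp_le)
      qed
      then have "bad (a,a') * pmf PA (a,a') \<le> bad (a,a') * (pmf \<pi> a * pmf \<pi> a' * H a / p ^ card (a \<inter> a'))"
        using b0 by (intro mult_left_mono)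
      then show "bad (a,a') * pmf PA (a,a') \<le> pmf \<pi> a * H a * (pmf \<pi> a' * bad (a,a') / p ^ card (a \<inter> a'))"
        by (simp add: algebra_simps)
    qed
    then show "(\<Sum>a'\<in>Pow X. bad (a,a') * pmf PA (a,a')) \<le> pmf \<pi> a * H a * (\<Sum>a'\<in>Pow X. pmf \<pi> a' * bad (a,a') / p ^ card (a \<inter> a'))"
      by (simp add: sum_distrib_left)
  qed
  also have "\<dots> \<le> (\<Sum>a\<in>Pow X. pmf \<pi> a * H a * q)"
  proof (intro sum_mono mult_left_mono)
    fix a assume a: "a \<in> Pow X"
    show "0 \<le> pmf \<pi> a * H a" using H_nonneg by simp
    show "(\<Sum>a'\<in>Pow X. pmf \<pi> a' * bad (a,a') / p ^ card (a \<inter> a')) \<le> q"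
    proof (cases "a = {}")
      case True
      have "0 \<le> q" unfolding q_def using eps p0 R1 by simp
      then show ?thesis using True unfolding bad_def by simp
    next
      case False
      have "(\<Sum>a'\<in>Pow X. pmf \<pi> a' * bad (a,a') / p ^ card (a \<inter> a')) =
            (\<Sum>a'\<in>Pow X. pmf \<pi> a' * (if nat \<lfloor>\<epsilon> * card a\<rfloor> + 1 \<le> card (a \<inter> a') then 1 else 0) / p ^ card (a \<inter> a'))"
        using False unfolding bad_def by simp
      also have "\<dots> \<le> q" unfolding q_def by (rule bad_bound[OF a False eps])
      finally show ?thesis .
    qed
  qed
  also have "\<dots> = (\<Sum>a\<in>Pow X. pmf \<pi> a * H a) * q" by (simp add: sum_distrib_right)
  also have "\<dots> \<le> 1 * q"
  proof (rule mult_right_mono[OF sumH])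
    show "0 \<le> q" unfolding q_def using eps p0 R1 by simp
  qed
  finally have "measure_pmf.expectation PA g2 \<le> \<epsilon> + q" by simp
  then show ?thesis using E_le_g unfolding q_def by linarith
qed

end


context setting begin

lemma E_final: "measure_pmf.expectation P f3 \<le> 7 / (p * R) powr (1/3)"
proof -
  define t where "t = (p * R) powr (1/3)"
  have pR: "p * R > 0" using p0 R1 by simp
  have tpos: "t > 0" unfolding t_def using p0 R1 by simp
  have t3: "p * R = t ^ 3"
  proof -
    have "t ^ 3 = t powr (real 3)" using tpos by (simp add: powr_realpow)
    also have "\<dots> = (p * R) powr (1/3 * 3)" unfolding t_def by (simp add: powr_powr)
    also have "\<dots> = p * R" using pR by simp
    finally show ?thesis by simp
  qed
  show ?thesis
  proof (cases "t \<le> 7")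
    case True
    have "1 \<le> 7 / t" using True tpos by simp
    then show ?thesis using E_le1 unfolding t_def by linarith
  next
    case False
    then have t7: "t > 7" by simp
    have e3: "exp 1 \<le> (3::real)" using exp_le by simp
    have h1: "1 / (p * R) \<le> 1 / t"
    proof -
      have "1 \<le> t ^ 2" using t7 by (intro one_le_power) simp
      then have "t * 1 \<le> t * t ^ 2" using tpos by (intro mult_left_mono) auto
      then have "t \<le> t ^ 3" by (simp add: power2_eq_square power3_eq_cube)
      then show ?thesis unfolding t3 using tpos by (simp add: frac_le)
    qed
    have eq: "exp 1 * (1 / (p * R)) / (1 / t) = exp 1 / t ^ 2"
      unfolding t3 using tpos by (simp add: field_simps power2_eq_square power3_eq_cube)
    have "7 * 7 < t * t" using t7 by (intro mult_strict_mono) auto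
    then have t2: "49 < t ^ 2" by (simp add: power2_eq_square)
    have h2: "exp 1 * (1 / (p * R)) / (1 / t) \<le> 1"
      unfolding eq using t2 e3 by (subst divide_le_eq_1) auto
    have "measure_pmf.expectation P f3 \<le> 1 / t + exp 1 * (1 / (p * R)) / (1 / t)"
      by (rule E_bound) (use tpos h1 h2 in auto)
    also have "\<dots> = 1 / t + exp 1 / t ^ 2" using eq by simp
    also have "\<dots> \<le> 7 / t"
    proof -
      have a: "exp 1 / t ^ 2 = (exp 1 / t) * (1 / t)" by (simp add: power2_eq_square)
      have "exp 1 / t \<le> 1" using e3 t7 tpos by simp
      then have "(exp 1 / t) * (1 / t) \<le> 1 * (1 / t)" using tpos by (intro mult_right_mono) auto
      then have "exp 1 / t ^ 2 \<le> 1 / t" using a by simp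
      moreover have "0 < 1 / t" using tpos by simp
      moreover have "7 / t = 7 * (1 / t)" by simp
      ultimately show ?thesis by linarith
    qed
    finally show ?thesis unfolding t_def .
  qed
qed

end

theorem theorem2:
  fixes X :: "'a set" and R p :: real and \<pi> :: "'a set pmf"
  assumes "finite X" and "R > 1" and "0 < p" and "p \<le> 1"
    and "spread R X \<pi>"
  shows "\<exists>P :: ('a set \<times> 'a set \<times> 'a set) pmf.
           map_pmf (\<lambda>(A, A', V). A) P = \<pi> \<and>
           map_pmf (\<lambda>(A, A', V). A') P = \<pi> \<and>
           map_pmf (\<lambda>(A, A', V). V) P = Qp p X \<and>
           map_pmf (\<lambda>(A, A', V). (A, V)) P = pair_pmf \<pi> (Qp p X) \<and>
           measure_pmf.expectation P
             (\<lambda>(A, A', V). if A \<noteq> {} then real (card (A' - V)) / real (card A) else 0)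
             \<le> 7 / (p * R) powr (1/3) \<and>
           spread R X (map_pmf (\<lambda>(A, A', V). A') P)"
proof -
  interpret S: setting X R p \<pi> using assms by unfold_locales auto
  show ?thesis
  proof (intro exI conjI)
    show "map_pmf (\<lambda>(A, A', V). A) S.P = \<pi>" by (rule S.marg_A)
    show "map_pmf (\<lambda>(A, A', V). A') S.P = \<pi>" by (rule S.marg_A')
    show "map_pmf (\<lambda>(A, A', V). V) S.P = Qp p X" by (rule S.marg_V)
    show "map_pmf (\<lambda>(A, A', V). (A, V)) S.P = pair_pmf \<pi> (Qp p X)" by (rule S.marg_AV)
    show "measure_pmf.expectation S.P
             (\<lambda>(A, A', V). if A \<noteq> {} then real (card (A' - V)) / real (card A) else 0)
             \<le> 7 / (p * R) powr (1/3)" using S.E_final unfolding S.f3_def .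
    show "spread R X (map_pmf (\<lambda>(A, A', V). A') S.P)" using S.marg_A' assms(5) by simp
  qed
qed


end
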